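(* Let $A$ be an associative unital algebra over a field $k$ of characteristic zero and $\delta$ a locally nilpotent $k$-linear derivation of $A$ such that $\delta(x)=1$ for some $x\in A$. Then the following are equivalent: (a) $A^\delta$ is a left Ore domain; (b) $A$ is a left Ore domain; (c) $A$ is a critically compressible left $A[z;\delta]$-module.
   Context: $A^\delta=\ker\delta$. $\delta$ locally nilpotent means for every $a$ there is $n>0$ with $\delta^n(a)=0$. $A[z;\delta]$ is the differential operator ring ($A[z]$ as left $A$-module, $za=az+\delta(a)$), acting on $A$ by $(\sum_i a_iz^i)\cdot x=\sum_ia_i\delta^i(x)$. A left Ore domain is a domain $S$ with $Sa\cap Sb\neq0$ for nonzero $a,b$. A nonzero module is critically compressible if it embeds into each of its nonzero submodules and into none of its factor modules $M/N$ with $N\neq0$. *)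

theory Defs
  imports Complex_Main
begin

definition k_algebra :: "('k::field_char_0 \<Rightarrow> 'a::ring_1 \<Rightarrow> 'a) \<Rightarrow> bool" where
  "k_algebra smult \<longleftrightarrow> module smult \<and>
     (\<forall>c a b. smult c (a * b) = smult c a * b \<and> smult c (a * b) = a * smult c b)"

definition k_derivation :: "('k \<Rightarrow> 'a::ring_1 \<Rightarrow> 'a) \<Rightarrow> ('a \<Rightarrow> 'a) \<Rightarrow> bool" where
  "k_derivation smult d \<longleftrightarrow>
     (\<forall>a b. d (a + b) = d a + d b) \<and>
     (\<forall>c a. d (smult c a) = smult c (d a)) \<and>
     (\<forall>a b. d (a * b) = d a * b + a * d b)"

definition locally_nilpotent :: "('a::zero \<Rightarrow> 'a) \<Rightarrow> bool" where
  "locally_nilpotent d \<longleftrightarrow> (\<forall>a. \<exists>n>0. (d ^^ n) a = 0)"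

definition constants :: "('a::zero \<Rightarrow> 'a) \<Rightarrow> 'a set" where
  "constants d = {a. d a = 0}"

definition left_ore_domain_on :: "'a::ring_1 set \<Rightarrow> bool" where
  "left_ore_domain_on S \<longleftrightarrow>
     (1::'a) \<noteq> 0 \<and>
     (\<forall>a\<in>S. \<forall>b\<in>S. a * b = 0 \<longrightarrow> a = 0 \<or> b = 0) \<and>
     (\<forall>a\<in>S. \<forall>b\<in>S. a \<noteq> 0 \<longrightarrow> b \<noteq> 0 \<longrightarrow> (\<exists>s\<in>S. \<exists>t\<in>S. s * a = t * b \<and> s * a \<noteq> 0))"

text \<open>Action of the differential operator sum_i cs!i z^i of A[z;delta] on A.\<close>
definition dop_act :: "('a::ring_1 \<Rightarrow> 'a) \<Rightarrow> 'a list \<Rightarrow> 'a \<Rightarrow> 'a" where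
  "dop_act d cs x = (\<Sum>i<length cs. cs ! i * (d ^^ i) x)"

definition dsubmodule :: "('a::ring_1 \<Rightarrow> 'a) \<Rightarrow> 'a set \<Rightarrow> bool" where
  "dsubmodule d N \<longleftrightarrow> 0 \<in> N \<and> (\<forall>x\<in>N. \<forall>y\<in>N. x + y \<in> N) \<and>
     (\<forall>cs. \<forall>x\<in>N. dop_act d cs x \<in> N)"

definition dmod_hom :: "('a::ring_1 \<Rightarrow> 'a) \<Rightarrow> ('a \<Rightarrow> 'a) \<Rightarrow> bool" where
  "dmod_hom d f \<longleftrightarrow> (\<forall>x y. f (x + y) = f x + f y) \<and>
     (\<forall>cs x. f (dop_act d cs x) = dop_act d cs (f x))"

definition embeds_into_sub :: "('a::ring_1 \<Rightarrow> 'a) \<Rightarrow> 'a set \<Rightarrow> bool" where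
  "embeds_into_sub d N \<longleftrightarrow> (\<exists>f. dmod_hom d f \<and> inj f \<and> range f \<subseteq> N)"

text \<open>A map A \<rightarrow> A/N is represented by a lift
  f : A \<rightarrow> A (f x is a representative of the image coset of x); it is a module
  homomorphism iff the defining identities hold modulo N, and injective iff
  f x \<in> N implies x = 0.\<close>
definition embeds_into_factor :: "('a::ring_1 \<Rightarrow> 'a) \<Rightarrow> 'a set \<Rightarrow> bool" where
  "embeds_into_factor d N \<longleftrightarrow> (\<exists>f.
     (\<forall>x y. f (x + y) - (f x + f y) \<in> N) \<and>
     (\<forall>cs x. f (dop_act d cs x) - dop_act d cs (f x) \<in> N) \<and>
     (\<forall>x. f x \<in> N \<longrightarrow> x = 0))"

definition critically_compressible :: "('a::ring_1 \<Rightarrow> 'a) \<Rightarrow> bool" where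
  "critically_compressible d \<longleftrightarrow> (\<exists>x::'a. x \<noteq> 0) \<and>
     (\<forall>N. dsubmodule d N \<longrightarrow> N \<noteq> {0} \<longrightarrow> embeds_into_sub d N) \<and>
     (\<forall>N. dsubmodule d N \<longrightarrow> N \<noteq> {0} \<longrightarrow> \<not> embeds_into_factor d N)"

end

theory Submission
  imports Defs
begin

lemma charz_from_module:
  fixes smult :: "'k::field_char_0 \<Rightarrow> 'a::ring_1 \<Rightarrow> 'a"
  assumes "k_algebra smult" "0 < n" "of_nat n * y = (0::'a)"
  shows "y = 0"
proof -
  interpret module smult using assms(1) by (simp add: k_algebra_def)
  have sm: "smult (of_nat m) z = of_nat m * z" for m z
    by (induction m) (auto simp: scale_left_distrib distrib_right)
  have "y = smult (inverse (of_nat n) * of_nat n) y" using assms(2) by simp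
  also have "\<dots> = smult (inverse (of_nat n)) (smult (of_nat n) y)" by simp
  also have "\<dots> = 0" using assms(3) sm by simp
  finally show ?thesis .
qed

locale der =
  fixes D :: "'a::ring_1 \<Rightarrow> 'a"
  assumes add: "D (a + b) = D a + D b"
    and mul: "D (a * b) = D a * b + a * D b"
    and nil: "\<exists>n>0. (D ^^ n) a = 0"
    and charz: "0 < n \<Longrightarrow> of_nat n * (y::'a) = 0 \<Longrightarrow> y = 0"
begin

lemma D0[simp]: "D 0 = 0"
  using add[of 0 0] by simp

lemma Dneg: "D (- a) = - D a"
proof -
  have "D a + D (-a) = 0" using add[of a "-a"] by simp
  thus ?thesis by (rule minus_unique[symmetric])
qed

lemma Ddiff: "D (a - b) = D a - D b"
  using add[of a "-b"] Dneg by simp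

lemma D1[simp]: "D 1 = 0"
  using mul[of 1 1] by simp

lemma Dn_add: "(D ^^ n) (a + b) = (D ^^ n) a + (D ^^ n) b"
  by (induction n) (auto simp: add)

lemma Dn0[simp]: "(D ^^ n) 0 = 0"
  by (induction n) auto

lemma Dn_neg: "(D ^^ n) (- a) = - (D ^^ n) a"
  by (induction n) (auto simp: Dneg)

lemma Dn_diff: "(D ^^ n) (a - b) = (D ^^ n) a - (D ^^ n) b"
  using Dn_add[of n a "-b"] Dn_neg by simp

lemma Dn_sum: "(D ^^ n) (sum f S) = (\<Sum>i\<in>S. (D ^^ n) (f i))"
  by (induction S rule: infinite_finite_induct) (auto simp: Dn_add)

lemma D_sum: "D (sum f S) = (\<Sum>i\<in>S. D (f i))"
  using Dn_sum[of 1] by simp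

lemma Dn_const_left: "D c = 0 \<Longrightarrow> (D ^^ n) (c * v) = c * (D ^^ n) v"
  by (induction n) (auto simp: mul)

lemma Dn_const_right: "D c = 0 \<Longrightarrow> (D ^^ n) (v * c) = (D ^^ n) v * c"
  by (induction n) (auto simp: mul)

lemma Dn_mono: "(D ^^ n) v = 0 \<Longrightarrow> n \<le> m \<Longrightarrow> (D ^^ m) v = 0"
proof -
  assume "(D ^^ n) v = 0" "n \<le> m"
  then have "(D ^^ m) v = (D ^^ (m - n)) ((D ^^ n) v)"
    by (metis funpow_add le_add_diff_inverse2 o_apply)
  then show ?thesis using \<open>(D ^^ n) v = 0\<close> by simp
qed

lemma D_Dn: "D ((D ^^ n) v) = (D ^^ Suc n) v" by simp

lemma Dn_D: "(D ^^ n) (D v) = (D ^^ Suc n) v" by (simp only: funpow_Suc_right o_apply)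

lemma exists_top:
  assumes "v \<noteq> 0"
  shows "\<exists>m. (D ^^ Suc m) v = 0 \<and> (D ^^ m) v \<noteq> 0"
proof -
  obtain p where "(D ^^ p) v = 0" using nil by blast
  have "\<And>p. (D ^^ p) v = 0 \<Longrightarrow> \<exists>m. (D ^^ Suc m) v = 0 \<and> (D ^^ m) v \<noteq> 0"
  proof -
    fix p show "(D ^^ p) v = 0 \<Longrightarrow> \<exists>m. (D ^^ Suc m) v = 0 \<and> (D ^^ m) v \<noteq> 0"
    proof (induction p)
      case 0 then show ?case using assms by simp
    next
      case (Suc p) then show ?case by (cases "(D ^^ p) v = 0") auto
    qed
  qed
  then show ?thesis using \<open>(D ^^ p) v = 0\<close> by blast
qed

lemma of_nat_D[simp]: "D (of_nat n) = 0"
  by (induction n) (auto simp: add)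

lemma Q:
  "\<forall>k m a b. k + m = n \<longrightarrow> (D ^^ Suc k) a = 0 \<longrightarrow> (D ^^ Suc m) b = 0 \<longrightarrow>
     (D ^^ Suc n) (a * b) = 0 \<and> (\<exists>N>0. (D ^^ n) (a * b) = of_nat N * ((D ^^ k) a * (D ^^ m) b))"
proof (induction n)
  case 0
  show ?case
  proof (intro allI impI)
    fix k m a b assume "k + m = (0::nat)" "(D ^^ Suc k) a = 0" "(D ^^ Suc m) b = 0"
    then have "D a = 0" "D b = 0" by auto
    then show "(D ^^ Suc 0) (a * b) = 0 \<and> (\<exists>N>0. (D ^^ 0) (a * b) = of_nat N * ((D ^^ k) a * (D ^^ m) b))"
      using \<open>k + m = 0\<close> by (auto simp: mul intro!: exI[of _ 1])
  qed
next
  case (Suc n)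
  show ?case
  proof (intro allI impI)
    fix k m a b assume km: "k + m = Suc n" and ha: "(D ^^ Suc k) a = 0" and hb: "(D ^^ Suc m) b = 0"
    define P where "P = (D ^^ k) a * (D ^^ m) b"
    have t1: "(D ^^ Suc n) (D a * b) = 0 \<and> (\<exists>N1. (D ^^ n) (D a * b) = of_nat N1 * P \<and> (0 < k \<longrightarrow> 0 < N1))"
    proof (cases k)
      case 0 then have "D a = 0" using ha by simp
      then show ?thesis using 0 by (auto intro!: exI[of _ 0])
    next
      case (Suc k')
      have "(D ^^ Suc k') (D a) = 0" using ha Suc by (simp only: Dn_D)
      moreover have "k' + m = n" using km Suc by simp
      ultimately have "(D ^^ Suc n) (D a * b) = 0 \<and> (\<exists>N>0. (D ^^ n) (D a * b) = of_nat N * ((D ^^ k') (D a) * (D ^^ m) b))"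
        using Suc.IH hb by blast
      moreover have "(D ^^ k') (D a) = (D ^^ k) a" using Suc by (simp only: Dn_D)
      ultimately show ?thesis unfolding P_def by auto
    qed
    have t2: "(D ^^ Suc n) (a * D b) = 0 \<and> (\<exists>N2. (D ^^ n) (a * D b) = of_nat N2 * P \<and> (0 < m \<longrightarrow> 0 < N2))"
    proof (cases m)
      case 0 then have "D b = 0" using hb by simp
      then show ?thesis using 0 by (auto intro!: exI[of _ 0])
    next
      case (Suc m')
      have "(D ^^ Suc m') (D b) = 0" using hb Suc by (simp only: Dn_D)
      moreover have "k + m' = n" using km Suc by simp
      ultimately have "(D ^^ Suc n) (a * D b) = 0 \<and> (\<exists>N>0. (D ^^ n) (a * D b) = of_nat N * ((D ^^ k) a * (D ^^ m') (D b)))"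
        using Suc.IH ha by blast
      moreover have "(D ^^ m') (D b) = (D ^^ m) b" using Suc by (simp only: Dn_D)
      ultimately show ?thesis unfolding P_def by auto
    qed
    obtain N1 N2 where n1: "(D ^^ n) (D a * b) = of_nat N1 * P" "0 < k \<longrightarrow> 0 < N1"
      and n2: "(D ^^ n) (a * D b) = of_nat N2 * P" "0 < m \<longrightarrow> 0 < N2" using t1 t2 by blast
    have e1: "(D ^^ Suc (Suc n)) (a * b) = (D ^^ Suc n) (D a * b) + (D ^^ Suc n) (a * D b)"
      by (simp only: Dn_D[symmetric] mul Dn_add)
    have e2: "(D ^^ Suc n) (a * b) = (D ^^ n) (D a * b) + (D ^^ n) (a * D b)"
      by (simp only: Dn_D[symmetric] mul Dn_add)
    have "0 < N1 + N2" using n1(2) n2(2) km by auto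
    moreover have "(D ^^ Suc n) (a * b) = of_nat (N1 + N2) * P"
      using e2 n1(1) n2(1) by (simp add: distrib_right)
    ultimately have "\<exists>N>0. (D ^^ Suc n) (a * b) = of_nat N * ((D ^^ k) a * (D ^^ m) b)"
      unfolding P_def by blast
    moreover have "(D ^^ Suc (Suc n)) (a * b) = 0" using e1 t1 t2 by simp
    ultimately show "(D ^^ Suc (Suc n)) (a * b) = 0 \<and> (\<exists>N>0. (D ^^ Suc n) (a * b) = of_nat N * ((D ^^ k) a * (D ^^ m) b))"
      by blast
  qed
qed


lemma domA:
  fixes a b :: 'a
  assumes domC: "\<forall>a\<in>constants D. \<forall>b\<in>constants D. a * b = 0 \<longrightarrow> a = 0 \<or> b = 0"
    and ab: "a * b = 0"
  shows "a = 0 \<or> b = 0"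
proof (rule ccontr)
  assume "\<not> (a = 0 \<or> b = 0)"
  then have "a \<noteq> 0" "b \<noteq> 0" by auto
  obtain m where m: "(D ^^ Suc m) a = 0" "(D ^^ m) a \<noteq> 0" using exists_top[OF \<open>a \<noteq> 0\<close>] by blast
  obtain n where n: "(D ^^ Suc n) b = 0" "(D ^^ n) b \<noteq> 0" using exists_top[OF \<open>b \<noteq> 0\<close>] by blast
  have "(D ^^ Suc (m + n)) (a * b) = 0 \<and> (\<exists>N>0. (D ^^ (m + n)) (a * b) = of_nat N * ((D ^^ m) a * (D ^^ n) b))"
    using Q[of "m + n", rule_format, of m n a b] m(1) n(1) by simp
  then obtain K where K: "K > 0" "(D ^^ (m + n)) (a * b) = of_nat K * ((D ^^ m) a * (D ^^ n) b)"
    by blast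
  then have "of_nat K * ((D ^^ m) a * (D ^^ n) b) = 0" using ab by simp
  then have "(D ^^ m) a * (D ^^ n) b = 0" by (rule charz[OF K(1)])
  moreover have "(D ^^ m) a \<in> constants D" "(D ^^ n) b \<in> constants D"
    using m(1) n(1) by (auto simp: constants_def)
  ultimately have "(D ^^ m) a = 0 \<or> (D ^^ n) b = 0" using domC by blast
  then show False using m(2) n(2) by blast
qed

lemma T:
  assumes "s \<noteq> 0" "D a = 0" "D b = 0" "s * a = t * b"
    and ra: "\<forall>y. y * a = 0 \<longrightarrow> y = 0" and rb: "\<forall>y. y * b = 0 \<longrightarrow> y = 0"
  shows "\<exists>s'\<in>constants D. \<exists>t'\<in>constants D. s' * a = t' * b \<and> s' * a \<noteq> 0"
proof -
  obtain m where m: "(D ^^ Suc m) s = 0" "(D ^^ m) s \<noteq> 0" using exists_top[OF assms(1)] by blast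
  have e: "(D ^^ k) s * a = (D ^^ k) t * b" for k
    using assms(4) Dn_const_right[OF assms(2), of k s] Dn_const_right[OF assms(3), of k t] by simp
  have "(D ^^ Suc m) t * b = 0" using e[of "Suc m"] m(1) by simp
  then have "(D ^^ Suc m) t = 0" using rb by blast
  then have "(D ^^ m) t \<in> constants D" "(D ^^ m) s \<in> constants D" using m(1)
    by (auto simp: constants_def)
  moreover have "(D ^^ m) s * a \<noteq> 0" using ra m(2) by auto
  ultimately show ?thesis using e[of m] by blast
qed

lemma C_mul: "D a = 0 \<Longrightarrow> D b = 0 \<Longrightarrow> D (a * b) = 0" by (simp add: mul)

lemma LA:
  fixes n :: nat
  assumes ore: "left_ore_domain_on (constants D)"
  shows "\<forall>(J::'j set) (v::'j \<Rightarrow> 'a). finite J \<longrightarrow> n < card J \<longrightarrow> (\<forall>j\<in>J. (D ^^ n) (v j) = 0) \<longrightarrow>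
     (\<exists>c. (\<forall>j\<in>J. D (c j) = 0) \<and> (\<exists>j\<in>J. c j \<noteq> 0) \<and> (\<Sum>j\<in>J. c j * v j) = 0)"
proof -
  have domC: "\<And>a b. D a = 0 \<Longrightarrow> D b = 0 \<Longrightarrow> a * b = 0 \<Longrightarrow> a = 0 \<or> b = 0"
    using ore unfolding left_ore_domain_on_def constants_def by blast
  have ore3: "\<And>a b. D a = 0 \<Longrightarrow> D b = 0 \<Longrightarrow> a \<noteq> 0 \<Longrightarrow> b \<noteq> 0 \<Longrightarrow>
      \<exists>s t. D s = 0 \<and> D t = 0 \<and> s * a = t * b \<and> s * a \<noteq> 0"
  proof -
    fix a b assume h: "D a = 0" "D b = 0" "a \<noteq> 0" "b \<noteq> 0"
    have "a \<in> constants D" "b \<in> constants D" using h by (auto simp: constants_def)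
    then have "\<exists>s\<in>constants D. \<exists>t\<in>constants D. s * a = t * b \<and> s * a \<noteq> 0"
      using ore h(3,4) unfolding left_ore_domain_on_def by blast
    then show "\<exists>s t. D s = 0 \<and> D t = 0 \<and> s * a = t * b \<and> s * a \<noteq> 0"
      by (auto simp: constants_def)
  qed
  show ?thesis
proof (induction n)
  case 0
  show ?case
  proof (intro allI impI)
    fix J :: "'j set" and v :: "'j \<Rightarrow> 'a" assume "finite J" "0 < card J" "\<forall>j\<in>J. (D ^^ 0) (v j) = 0"
    then have "J \<noteq> {}" "\<forall>j\<in>J. v j = 0" by auto
    then show "\<exists>c. (\<forall>j\<in>J. D (c j) = 0) \<and> (\<exists>j\<in>J. c j \<noteq> 0) \<and> (\<Sum>j\<in>J. c j * v j) = 0"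
      by (intro exI[of _ "\<lambda>_. 1"]) auto
  qed
next
  case (Suc n)
  show ?case
  proof (intro allI impI)
    fix J :: "'j set" and v :: "'j \<Rightarrow> 'a" assume fin: "finite J" and cardJ: "Suc n < card J"
      and hv: "\<forall>j\<in>J. (D ^^ Suc n) (v j) = 0"
    define w where "w j = (D ^^ n) (v j)" for j
    have Dw: "D (w j) = 0" if "j \<in> J" for j using hv that by (simp add: w_def)
    show "\<exists>c. (\<forall>j\<in>J. D (c j) = 0) \<and> (\<exists>j\<in>J. c j \<noteq> 0) \<and> (\<Sum>j\<in>J. c j * v j) = 0"
    proof (cases "\<forall>j\<in>J. w j = 0")
      case True
      then have h: "\<forall>j\<in>J. (D ^^ n) (v j) = 0" by (simp add: w_def)
      have "n < card J" using cardJ by simp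
      have "finite J \<longrightarrow> n < card J \<longrightarrow> (\<forall>j\<in>J. (D ^^ n) (v j) = 0) \<longrightarrow>
        (\<exists>c. (\<forall>j\<in>J. D (c j) = 0) \<and> (\<exists>j\<in>J. c j \<noteq> 0) \<and> (\<Sum>j\<in>J. c j * v j) = 0)"
        using Suc.IH by (elim allE)
      then show ?thesis using fin h \<open>n < card J\<close> by (elim impE)
    next
      case False
      then obtain j0 where j0: "j0 \<in> J" "w j0 \<noteq> 0" by blast
      define J' where "J' = J - {j0}"
      have finJ': "finite J'" using fin by (simp add: J'_def)
      have cardJ': "n < card J'" using cardJ j0 fin by (simp add: J'_def)
      have "\<forall>j\<in>J'. \<exists>p. D (fst p) = 0 \<and> D (snd p) = 0 \<and> fst p \<noteq> 0 \<and> fst p * w j = snd p * w j0"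
      proof
        fix j assume "j \<in> J'"
        then have jJ: "j \<in> J" by (simp add: J'_def)
        show "\<exists>p. D (fst p) = 0 \<and> D (snd p) = 0 \<and> fst p \<noteq> 0 \<and> fst p * w j = snd p * w j0"
        proof (cases "w j = 0")
          case True then show ?thesis by (intro exI[of _ "(1, 0)"]) auto
        next
          case False
          then obtain s t where "D s = 0" "D t = 0" "s * w j = t * w j0" "s * w j \<noteq> 0"
            using ore3[OF Dw[OF jJ] Dw[OF j0(1)] False j0(2)] by blast
          then show ?thesis by (intro exI[of _ "(s, t)"]) auto
        qed
      qed
      from bchoice[OF this] obtain p where p: "\<forall>j\<in>J'. D (fst (p j)) = 0 \<and> D (snd (p j)) = 0 \<and> fst (p j) \<noteq> 0 \<and> fst (p j) * w j = snd (p j) * w j0"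
        by blast
      define s where "s j = fst (p j)" for j
      define t where "t j = snd (p j)" for j
      define v' where "v' j = s j * v j - t j * v j0" for j
      have "\<forall>j\<in>J'. (D ^^ n) (v' j) = 0"
      proof
        fix j assume "j \<in> J'"
        then show "(D ^^ n) (v' j) = 0" using p
          by (simp add: v'_def s_def t_def Dn_diff Dn_const_left w_def)
      qed
      then obtain c' where c': "\<forall>j\<in>J'. D (c' j) = 0" "\<exists>j\<in>J'. c' j \<noteq> 0" "(\<Sum>j\<in>J'. c' j * v' j) = 0"
        using Suc.IH finJ' cardJ' by blast
      define c where "c j = (if j = j0 then - (\<Sum>i\<in>J'. c' i * t i) else c' j * s j)" for j
      have j0J': "j0 \<notin> J'" by (simp add: J'_def)
      have Dc: "\<forall>j\<in>J. D (c j) = 0"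
      proof
        fix j assume "j \<in> J"
        show "D (c j) = 0"
        proof (cases "j = j0")
          case True
          then show ?thesis using c' p by (simp add: c_def Dneg D_sum t_def mul)
        next
          case False
          then have "j \<in> J'" using \<open>j \<in> J\<close> by (simp add: J'_def)
          then show ?thesis using c' p False by (simp add: c_def s_def mul)
        qed
      qed
      have nz: "\<exists>j\<in>J. c j \<noteq> 0"
      proof -
        obtain j1 where j1: "j1 \<in> J'" "c' j1 \<noteq> 0" using c' by blast
        have "j1 \<noteq> j0" "j1 \<in> J" using j1 by (auto simp: J'_def)
        have "D (c' j1) = 0" "D (s j1) = 0" "s j1 \<noteq> 0" using j1 c' p by (auto simp: s_def)
        then have "c' j1 * s j1 \<noteq> 0" using domC j1(2) by blast
        then show ?thesis using \<open>j1 \<noteq> j0\<close> \<open>j1 \<in> J\<close> by (auto simp: c_def)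
      qed
      have "(\<Sum>j\<in>J'. c' j * v' j) = (\<Sum>j\<in>J'. c' j * s j * v j) - (\<Sum>j\<in>J'. c' j * t j) * v j0"
        by (simp add: v'_def right_diff_distrib sum_subtractf sum_distrib_right mult.assoc)
      then have eq: "(\<Sum>j\<in>J'. c' j * s j * v j) = (\<Sum>j\<in>J'. c' j * t j) * v j0" using c' by simp
      have "(\<Sum>j\<in>J. c j * v j) = c j0 * v j0 + (\<Sum>j\<in>J'. c j * v j)"
        using fin j0 by (simp add: J'_def sum.remove)
      also have "(\<Sum>j\<in>J'. c j * v j) = (\<Sum>j\<in>J'. c' j * s j * v j)"
        using j0J' by (intro sum.cong) (auto simp: c_def)
      also have "c j0 * v j0 + (\<Sum>j\<in>J'. c' j * s j * v j) = 0"
        using eq by (simp add: c_def)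
      finally show ?thesis using Dc nz by blast
    qed
  qed
qed
qed


lemma xpow:
  assumes x: "D x = 1"
  shows "(D ^^ Suc i) (x ^ i) = 0 \<and> (\<exists>M>0. (D ^^ i) (x ^ i) = of_nat M)"
proof (induction i)
  case 0 then show ?case by (auto intro!: exI[of _ 1])
next
  case (Suc i)
  then obtain M where M: "M > 0" "(D ^^ i) (x ^ i) = of_nat M" by blast
  have h2: "(D ^^ Suc 1) x = 0" using x by simp
  have "(D ^^ Suc (1 + i)) (x * x ^ i) = 0 \<and> (\<exists>N>0. (D ^^ (1 + i)) (x * x ^ i) = of_nat N * ((D ^^ 1) x * (D ^^ i) (x ^ i)))"
    using Q[of "1 + i", rule_format, of 1 i x "x ^ i"] h2 Suc.IH by blast
  then obtain N where N: "N > 0" "(D ^^ Suc i) (x ^ Suc i) = of_nat N * ((D ^^ 1) x * (D ^^ i) (x ^ i))"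
    "(D ^^ Suc (Suc i)) (x ^ Suc i) = 0" by auto
  have e: "(D ^^ Suc i) (x ^ Suc i) = of_nat (N * M)" using N(2) M(2) x by simp
  have "N * M > 0" using N(1) M(1) by simp
  then have "\<exists>K>0. (D ^^ Suc i) (x ^ Suc i) = of_nat K" using e by blast
  then show ?case using N(3) by blast
qed

lemma indep:
  assumes x: "D x = 1"
  shows "\<forall>c. (\<forall>i<r. D (c i) = 0) \<longrightarrow> (\<Sum>i<r. c i * x ^ i) = 0 \<longrightarrow> (\<forall>i<r. c i = 0)"
proof (induction r)
  case 0 then show ?case by simp
next
  case (Suc r)
  show ?case
  proof (rule allI, intro impI)
    fix c :: "nat \<Rightarrow> 'a" assume hc: "\<forall>i<Suc r. D (c i) = 0" and hs: "(\<Sum>i<Suc r. c i * x ^ i) = 0"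
    obtain M where M: "M > 0" "(D ^^ r) (x ^ r) = of_nat M" using xpow[OF x, of r] by blast
    have z: "(D ^^ r) (c i * x ^ i) = 0" if "i < r" for i
    proof -
      have "(D ^^ r) (x ^ i) = 0" using Dn_mono[of "Suc i" "x ^ i" r] xpow[OF x, of i] that by simp
      then show ?thesis using hc that by (simp add: Dn_const_left)
    qed
    have "0 = (D ^^ r) (\<Sum>i<Suc r. c i * x ^ i)" using hs by simp
    also have "\<dots> = (\<Sum>i<r. (D ^^ r) (c i * x ^ i)) + (D ^^ r) (c r * x ^ r)"
      by (simp add: Dn_sum Dn_add)
    also have "\<dots> = (D ^^ r) (c r * x ^ r)" using z by simp
    also have "\<dots> = c r * of_nat M" using hc M(2) by (simp add: Dn_const_left)
    finally have "c r * of_nat M = 0" by (rule sym)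
    then have "of_nat M * c r = 0" by (metis mult_of_nat_commute)
    then have cr: "c r = 0" by (rule charz[OF M(1)])
    have s1: "(\<Sum>i<Suc r. c i * x ^ i) = (\<Sum>i<r. c i * x ^ i) + c r * x ^ r" by (rule sum.lessThan_Suc)
    have s2: "(\<Sum>i<r. c i * x ^ i) = 0" using hs cr s1 by simp
    have hc': "\<forall>i<r. D (c i) = 0" using hc by simp
    have ih: "(\<forall>i<r. D (c i) = 0) \<longrightarrow> (\<Sum>i<r. c i * x ^ i) = 0 \<longrightarrow> (\<forall>i<r. c i = 0)"
      using Suc.IH by (rule spec)
    have "\<forall>i<r. c i = 0" using ih hc' s2 by blast
    then show "\<forall>i<Suc r. c i = 0" using cr by (auto simp: less_Suc_eq)
  qed
qed

lemma oreA:
  fixes a b :: 'a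
  assumes ore: "left_ore_domain_on (constants D)" and x: "D x = 1"
    and a: "a \<noteq> 0" and b: "b \<noteq> 0"
  shows "\<exists>s t. s * a = t * b \<and> s * a \<noteq> 0"
proof -
  have domC: "\<forall>a\<in>constants D. \<forall>b\<in>constants D. a * b = 0 \<longrightarrow> a = 0 \<or> b = 0"
    using ore unfolding left_ore_domain_on_def by blast
  obtain ma where ma: "(D ^^ Suc ma) a = 0" using exists_top[OF a] by blast
  obtain mb where mb: "(D ^^ Suc mb) b = 0" using exists_top[OF b] by blast
  define N where "N = max ma mb"
  have aN: "(D ^^ Suc N) a = 0" using Dn_mono[of "Suc ma" a "Suc N"] ma by (simp add: N_def)
  have bN: "(D ^^ Suc N) b = 0" using Dn_mono[of "Suc mb" b "Suc N"] mb by (simp add: N_def)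
  have van: "(D ^^ (2 * N + 1)) (x ^ i * y) = 0" if "i \<le> N" "(D ^^ Suc N) y = 0" for i y
  proof -
    have "(D ^^ Suc (i + N)) (x ^ i * y) = 0"
      using Q[of "i + N", rule_format, of i N "x ^ i" y] xpow[OF x, of i] that(2) by blast
    then show ?thesis using that(1) Dn_mono[of "Suc (i + N)" "x ^ i * y" "2 * N + 1"] by simp
  qed
  define J where "J = {..N} \<times> (UNIV :: bool set)"
  define v where "v p = x ^ (fst p) * (if snd p then a else b)" for p
  have finJ: "finite J" by (simp add: J_def)
  have cJ: "2 * N + 1 < card J" by (simp add: J_def card_cartesian_product)
  have hv: "\<forall>j\<in>J. (D ^^ (2 * N + 1)) (v j) = 0"
    using van aN bN by (auto simp: J_def v_def)
  obtain c where c: "\<forall>j\<in>J. D (c j) = 0" "\<exists>j\<in>J. c j \<noteq> 0" "(\<Sum>j\<in>J. c j * v j) = 0"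
    using LA[OF ore, of "2 * N + 1", rule_format, of J v] finJ cJ hv by blast
  define s where "s = (\<Sum>i<Suc N. c (i, True) * x ^ i)"
  define t where "t = - (\<Sum>i<Suc N. c (i, False) * x ^ i)"
  have "(\<Sum>j\<in>J. c j * v j) = (\<Sum>i\<in>{..N}. \<Sum>y\<in>(UNIV::bool set). c (i, y) * v (i, y))"
    unfolding J_def by (simp add: sum.cartesian_product)
  also have "\<dots> = (\<Sum>i\<in>{..N}. c (i, True) * x ^ i * a + c (i, False) * x ^ i * b)"
    by (simp add: UNIV_bool v_def mult.assoc add.commute)
  also have "\<dots> = s * a - t * b"
    by (simp add: s_def t_def sum.distrib sum_distrib_right lessThan_Suc_atMost)
  finally have st: "s * a = t * b" using c(3) by simp
  have "s \<noteq> 0 \<or> t \<noteq> 0"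
  proof (rule ccontr)
    assume "\<not> (s \<noteq> 0 \<or> t \<noteq> 0)"
    then have "s = 0" "t = 0" by auto
    then have s0: "(\<Sum>i<Suc N. c (i, True) * x ^ i) = 0" and t0: "(\<Sum>i<Suc N. c (i, False) * x ^ i) = 0"
      unfolding s_def t_def by (simp_all only: neg_equal_0_iff_equal)
    have hT: "\<forall>i<Suc N. D (c (i, True)) = 0" and hF: "\<forall>i<Suc N. D (c (i, False)) = 0"
      using c(1) by (simp_all add: J_def less_Suc_eq_le)
    have "\<forall>i<Suc N. c (i, True) = 0"
      using indep[OF x, of "Suc N", THEN spec, of "\<lambda>i. c (i, True)", THEN mp, OF hT, THEN mp, OF s0] .
    moreover have "\<forall>i<Suc N. c (i, False) = 0"
      using indep[OF x, of "Suc N", THEN spec, of "\<lambda>i. c (i, False)", THEN mp, OF hF, THEN mp, OF t0] .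
    ultimately have "\<forall>j\<in>J. c j = 0" unfolding J_def less_Suc_eq_le
      by (metis (full_types) SigmaE atMost_iff)
    then show False using c(2) by blast
  qed
  then show ?thesis
  proof
    assume "s \<noteq> 0"
    then have "s * a \<noteq> 0" using domA[OF domC, of s a] a by blast
    then show ?thesis using st by blast
  next
    assume "t \<noteq> 0"
    then have "t * b \<noteq> 0" using domA[OF domC, of t b] b by blast
    then show ?thesis using st by metis
  qed
qed


lemma dop_single[simp]: "dop_act D [a] y = a * y" by (simp add: dop_act_def)

lemma dop_D: "dop_act D [0, 1] y = D y" by (simp add: dop_act_def eval_nat_numeral)

lemma dop_zero[simp]: "dop_act D cs 0 = 0" by (simp add: dop_act_def)

lemma dop_right: "D d = 0 \<Longrightarrow> dop_act D cs (v * d) = dop_act D cs v * d"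
  by (simp add: dop_act_def sum_distrib_right Dn_const_right mult.assoc)

lemma sub_mult: "dsubmodule D N \<Longrightarrow> y \<in> N \<Longrightarrow> a * y \<in> N"
  unfolding dsubmodule_def by (metis dop_single)

lemma sub_D: "dsubmodule D N \<Longrightarrow> y \<in> N \<Longrightarrow> D y \<in> N"
  unfolding dsubmodule_def by (metis dop_D)

lemma sub_Dn: "dsubmodule D N \<Longrightarrow> y \<in> N \<Longrightarrow> (D ^^ n) y \<in> N"
  by (induction n) (auto simp: sub_D)

lemma sub_add: "dsubmodule D N \<Longrightarrow> y \<in> N \<Longrightarrow> z \<in> N \<Longrightarrow> y + z \<in> N"
  unfolding dsubmodule_def by blast

lemma sub_range: "D d = 0 \<Longrightarrow> dsubmodule D (range (\<lambda>y. y * d))"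
  unfolding dsubmodule_def
proof (intro conjI ballI allI)
  assume d: "D d = 0"
  show "0 \<in> range (\<lambda>y. y * d)" by (metis mult_zero_left rangeI)
  fix p q assume "p \<in> range (\<lambda>y. y * d)" "q \<in> range (\<lambda>y. y * d)"
  then show "p + q \<in> range (\<lambda>y. y * d)" by (auto simp: distrib_right[symmetric])
next
  fix cs p assume d: "D d = 0" and "p \<in> range (\<lambda>y. y * d)"
  then obtain y where "p = y * d" by blast
  then show "dop_act D cs p \<in> range (\<lambda>y. y * d)" using dop_right[OF d] by auto
qed

lemma sub_ann: "D d = 0 \<Longrightarrow> dsubmodule D {y. y * d = 0}"
  unfolding dsubmodule_def
proof (intro conjI ballI allI)
  assume d: "D d = 0"
  show "0 \<in> {y. y * d = 0}" by simp
  fix p q assume "p \<in> {y. y * d = 0}" "q \<in> {y. y * d = 0}"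
  then show "p + q \<in> {y. y * d = 0}" by (simp add: distrib_right)
next
  fix cs p assume d: "D d = 0" and "p \<in> {y. y * d = 0}"
  then show "dop_act D cs p \<in> {y. y * d = 0}" using dop_right[OF d, of cs p, symmetric] by simp
qed

lemma hom_form: "dmod_hom D f \<Longrightarrow> f a = a * f 1"
  unfolding dmod_hom_def by (metis dop_single mult.right_neutral)

lemma hom_const: "dmod_hom D f \<Longrightarrow> D (f 1) = 0"
proof -
  assume h: "dmod_hom D f"
  have "f 0 = f 0 + f 0" using h unfolding dmod_hom_def by (metis add_0)
  then have f0: "f 0 = 0" by simp
  have "f (dop_act D [0, 1] 1) = dop_act D [0, 1] (f 1)" using h unfolding dmod_hom_def by blast
  then show ?thesis using f0 by (simp add: dop_D)
qed

lemma nonzero_const: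
  assumes "dsubmodule D N" "N \<noteq> {0}"
  shows "\<exists>c\<in>N. c \<noteq> 0 \<and> D c = 0"
proof -
  have "0 \<in> N" using assms(1) by (simp add: dsubmodule_def)
  then obtain n where n: "n \<in> N" "n \<noteq> 0" using assms(2) by blast
  obtain m where m: "(D ^^ Suc m) n = 0" "(D ^^ m) n \<noteq> 0" using exists_top[OF n(2)] by blast
  have "(D ^^ m) n \<in> N" using sub_Dn[OF assms(1) n(1)] .
  then show ?thesis using m by auto
qed

lemma b_to_c:
  assumes ore: "left_ore_domain_on (UNIV :: 'a set)"
  shows "critically_compressible D"
proof -
  have dom: "\<And>a b::'a. a * b = 0 \<Longrightarrow> a = 0 \<or> b = 0" using ore unfolding left_ore_domain_on_def by blast
  have oreU: "\<And>a b::'a. a \<noteq> 0 \<Longrightarrow> b \<noteq> 0 \<Longrightarrow> \<exists>s t. s * a = t * b \<and> s * a \<noteq> 0"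
    using ore unfolding left_ore_domain_on_def by blast
  have p1: "\<exists>x::'a. x \<noteq> 0" by (intro exI[of _ 1]) simp
  have p2: "embeds_into_sub D N" if sub: "dsubmodule D N" and nz: "N \<noteq> {0}" for N
  proof -
    obtain c where c: "c \<in> N" "c \<noteq> 0" "D c = 0" using nonzero_const[OF sub nz] by blast
    have "dmod_hom D (\<lambda>a. a * c)" unfolding dmod_hom_def
      using dop_right[OF c(3)] by (simp add: distrib_right)
    moreover have "inj (\<lambda>a. a * c)"
    proof (rule injI)
      fix a b assume "a * c = b * c"
      then have "(a - b) * c = 0" by (simp add: left_diff_distrib)
      then show "a = b" using dom[of "a - b" c] c(2) by simp
    qed
    moreover have "range (\<lambda>a. a * c) \<subseteq> N" using sub_mult[OF sub c(1)] by auto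
    ultimately show ?thesis unfolding embeds_into_sub_def by blast
  qed
  have p3: "\<not> embeds_into_factor D N" if sub: "dsubmodule D N" and nz: "N \<noteq> {0}" for N
  proof
    assume "embeds_into_factor D N"
    then obtain f where f: "\<forall>cs x. f (dop_act D cs x) - dop_act D cs (f x) \<in> N"
      "\<forall>x. f x \<in> N \<longrightarrow> x = 0" unfolding embeds_into_factor_def by blast
    obtain c where c: "c \<in> N" "c \<noteq> 0" "D c = 0" using nonzero_const[OF sub nz] by blast
    define u where "u = f 1"
    have key: "f a - a * u \<in> N" for a using f(1)[rule_format, of "[a]" 1] by (simp add: u_def)
    show False
    proof (cases "u = 0")
      case True
      then have "f 1 \<in> N" using key[of 1] by simp
      then show False using f(2)[rule_format, of 1] by simp
    next
      case False
      then obtain s t where st: "s * u = t * c" "s * u \<noteq> 0" using oreU c(2) by blast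
      have "t * c \<in> N" using sub_mult[OF sub c(1)] .
      then have "(f s - s * u) + s * u \<in> N" using key[of s] st(1) sub_add[OF sub] by metis
      then have "f s \<in> N" by simp
      then have "s = 0" using f(2) by blast
      then show False using st(2) by simp
    qed
  qed
  show ?thesis unfolding critically_compressible_def using p1 p2 p3 by blast
qed

lemma c_to_a:
  assumes cc: "critically_compressible D"
  shows "left_ore_domain_on (constants D)"
proof -
  have emb: "\<And>N. dsubmodule D N \<Longrightarrow> N \<noteq> {0} \<Longrightarrow> embeds_into_sub D N"
    and nfac: "\<And>N. dsubmodule D N \<Longrightarrow> N \<noteq> {0} \<Longrightarrow> \<not> embeds_into_factor D N"
    using cc unfolding critically_compressible_def by blast+
  have reg: "a = 0" if d: "D d = 0" "d \<noteq> 0" and ad: "a * d = 0" for a d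
  proof (rule ccontr)
    assume a: "a \<noteq> 0"
    define K where "K = {y. y * d = 0}"
    define M where "M = range (\<lambda>y. y * d)"
    have subK: "dsubmodule D K" unfolding K_def by (rule sub_ann[OF d(1)])
    have subM: "dsubmodule D M" unfolding M_def by (rule sub_range[OF d(1)])
    have "d \<in> M" unfolding M_def by (metis mult_1 rangeI)
    then have nzM: "M \<noteq> {0}" using d(2) by blast
    have "a \<in> K" using ad by (simp add: K_def)
    then have nzK: "K \<noteq> {0}" using a by blast
    obtain f where f: "dmod_hom D f" "inj f" "range f \<subseteq> M"
      using emb[OF subM nzM] unfolding embeds_into_sub_def by blast
    define e where "e = f 1"
    have De: "D e = 0" using hom_const[OF f(1)] by (simp add: e_def)
    have fe: "f y = y * e" for y unfolding e_def by (rule hom_form[OF f(1)])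
    have "e \<in> M" using f(3) unfolding e_def by blast
    then obtain h where h: "e = h * d" unfolding M_def by blast
    have "embeds_into_factor D K" unfolding embeds_into_factor_def
    proof (intro exI[of _ "\<lambda>y. y * h"] conjI allI impI)
      fix p q show "(p + q) * h - (p * h + q * h) \<in> K" by (simp add: distrib_right K_def)
    next
      fix cs y
      have "(dop_act D cs y * h - dop_act D cs (y * h)) * d
          = dop_act D cs y * e - dop_act D cs (y * h) * d"
        by (simp add: left_diff_distrib h mult.assoc)
      also have "\<dots> = dop_act D cs y * e - dop_act D cs (y * e)"
        using dop_right[OF d(1), of cs "y * h", symmetric] by (simp add: h mult.assoc)
      also have "\<dots> = 0" by (simp add: dop_right[OF De])
      finally show "dop_act D cs y * h - dop_act D cs (y * h) \<in> K" by (simp add: K_def)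
    next
      fix y assume "y * h \<in> K"
      then have "y * e = 0" by (simp add: K_def h mult.assoc)
      then have "f y = f 0" using fe by simp
      then show "y = 0" using f(2) by (simp add: inj_def)
    qed
    then show False using nfac[OF subK nzK] by blast
  qed
  have dom: "\<forall>a\<in>constants D. \<forall>b\<in>constants D. a * b = 0 \<longrightarrow> a = 0 \<or> b = 0"
    unfolding constants_def using reg by blast
  have ore: "\<exists>s\<in>constants D. \<exists>t\<in>constants D. s * a = t * b \<and> s * a \<noteq> 0"
    if a: "a \<in> constants D" "a \<noteq> 0" and b: "b \<in> constants D" "b \<noteq> 0" for a b
  proof -
    have Da: "D a = 0" and Db: "D b = 0" using a b by (auto simp: constants_def)
    define N where "N = range (\<lambda>y. y * b)"
    have subN: "dsubmodule D N" unfolding N_def by (rule sub_range[OF Db])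
    have "b \<in> N" unfolding N_def by (metis mult_1 rangeI)
    then have nzN: "N \<noteq> {0}" using b(2) by blast
    have "\<not> embeds_into_factor D N" using nfac[OF subN nzN] .
    then have "\<not> (\<forall>y. y * a \<in> N \<longrightarrow> y = 0)"
      unfolding embeds_into_factor_def
      apply (simp only: not_ex)
      apply (drule spec[of _ "\<lambda>y. y * a"])
      using dop_right[OF Da] subN by (auto simp: distrib_right dsubmodule_def)
    then obtain s where s: "s * a \<in> N" "s \<noteq> 0" by blast
    then obtain t where st: "s * a = t * b" unfolding N_def by blast
    show ?thesis
      by (rule T[OF s(2) Da Db st]) (use reg Da Db a(2) b(2) in blast)+
  qed
  show ?thesis unfolding left_ore_domain_on_def using dom ore by auto
qed

lemma a_to_b:
  assumes ore: "left_ore_domain_on (constants D)" and x: "D x = 1"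
  shows "left_ore_domain_on (UNIV :: 'a set)"
proof -
  have domC: "\<forall>a\<in>constants D. \<forall>b\<in>constants D. a * b = 0 \<longrightarrow> a = 0 \<or> b = 0"
    using ore unfolding left_ore_domain_on_def by blast
  show ?thesis unfolding left_ore_domain_on_def
    using domA[OF domC] oreA[OF ore x] by auto
qed

lemma b_to_a:
  assumes ore: "left_ore_domain_on (UNIV :: 'a set)"
  shows "left_ore_domain_on (constants D)"
proof -
  have dom: "\<And>a b::'a. a * b = 0 \<Longrightarrow> a = 0 \<or> b = 0" using ore unfolding left_ore_domain_on_def by blast
  have oreU: "\<And>a b::'a. a \<noteq> 0 \<Longrightarrow> b \<noteq> 0 \<Longrightarrow> \<exists>s t. s * a = t * b \<and> s * a \<noteq> 0"
    using ore unfolding left_ore_domain_on_def by blast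
  have o: "\<exists>s\<in>constants D. \<exists>t\<in>constants D. s * a = t * b \<and> s * a \<noteq> 0"
    if a: "a \<in> constants D" "a \<noteq> 0" and b: "b \<in> constants D" "b \<noteq> 0" for a b
  proof -
    have Da: "D a = 0" and Db: "D b = 0" using a b by (auto simp: constants_def)
    obtain s t where st: "s * a = t * b" "s * a \<noteq> 0" using oreU[OF a(2) b(2)] by blast
    have "s \<noteq> 0" using st(2) by auto
    show ?thesis
      by (rule T[OF \<open>s \<noteq> 0\<close> Da Db st(1)]) (use dom a(2) b(2) in blast)+
  qed
  show ?thesis unfolding left_ore_domain_on_def using dom o by auto
qed

end

theorem proposition3p12:
  fixes smult :: "'k::field_char_0 \<Rightarrow> 'a::ring_1 \<Rightarrow> 'a"
    and \<delta> :: "'a \<Rightarrow> 'a"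
  assumes "k_algebra smult"
    and "k_derivation smult \<delta>"
    and "locally_nilpotent \<delta>"
    and "\<exists>x. \<delta> x = 1"
  shows "(left_ore_domain_on (constants \<delta>) \<longleftrightarrow> left_ore_domain_on (UNIV :: 'a set))
       \<and> (left_ore_domain_on (UNIV :: 'a set) \<longleftrightarrow> critically_compressible \<delta>)"
proof -
  interpret der \<delta>
  proof
    fix a b show "\<delta> (a + b) = \<delta> a + \<delta> b" using assms(2) unfolding k_derivation_def by blast
  next
    fix a b show "\<delta> (a * b) = \<delta> a * b + a * \<delta> b" using assms(2) unfolding k_derivation_def by blast
  next
    fix a show "\<exists>n>0. (\<delta> ^^ n) a = 0" using assms(3) unfolding locally_nilpotent_def by blast
  next
    fix n :: nat and y :: 'a assume "0 < n" "of_nat n * y = 0"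
    then show "y = 0" using charz_from_module[OF assms(1)] by blast
  qed
  obtain x where x: "\<delta> x = 1" using assms(4) by blast
  show ?thesis using a_to_b[OF _ x] b_to_a b_to_c c_to_a by blast
qed

end
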